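(* Let $K$ be an algebraically closed field with $\operatorname{char}K\neq 2$, and let $f$ be a Lie polynomial (not necessarily homogeneous) in $x_1,\dots,x_m$, evaluated on $\operatorname{sl}_2(K)$. Then $\operatorname{Im} f$ is one of: $\{0\}$; $\operatorname{sl}_2(K)$; or the set consisting of $0$ and all non-nilpotent trace-zero $2\times 2$ matrices.
   Context: A Lie polynomial is an element of the free Lie algebra on $x_1,\dots,x_m$, i.e. a linear combination of Lie monomials built from the letters by iterated brackets; it is viewed as an associative polynomial via $[a,b]=ab-ba$. $\operatorname{sl}_2(K)$ is the Lie algebra of trace-zero $2\times 2$ matrices, and $\operatorname{Im} f=\{f(a_1,\dots,a_m):a_i\in\operatorname{sl}_2(K)\}$. *)

theory Defs
  imports "HOL-Analysis.Analysis" "HOL-Computational_Algebra.Polynomial"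
begin

text \<open>Each such expression denotes an element
of the free Lie algebra; evaluation factors through it, so the image is well defined.\<close>
datatype 'k lie_poly =
    LVar nat
  | LZero
  | LAdd "'k lie_poly" "'k lie_poly"
  | LScale 'k "'k lie_poly"
  | LBracket "'k lie_poly" "'k lie_poly"

fun lie_vars :: "'k lie_poly \<Rightarrow> nat set" where
  "lie_vars (LVar i) = {i}"
| "lie_vars LZero = {}"
| "lie_vars (LAdd p q) = lie_vars p \<union> lie_vars q"
| "lie_vars (LScale c p) = lie_vars p"
| "lie_vars (LBracket p q) = lie_vars p \<union> lie_vars q"

definition commutator :: "'k::comm_ring_1^2^2 \<Rightarrow> 'k^2^2 \<Rightarrow> 'k^2^2" where
  "commutator A B = A ** B - B ** A"

fun lie_eval :: "(nat \<Rightarrow> 'k::comm_ring_1^2^2) \<Rightarrow> 'k lie_poly \<Rightarrow> 'k^2^2" where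
  "lie_eval a (LVar i) = a i"
| "lie_eval a LZero = 0"
| "lie_eval a (LAdd p q) = lie_eval a p + lie_eval a q"
| "lie_eval a (LScale c p) = (\<chi> i j. c * (lie_eval a p) $ i $ j)"
| "lie_eval a (LBracket p q) = commutator (lie_eval a p) (lie_eval a q)"

definition sl2 :: "('k::comm_ring_1^2^2) set" where
  "sl2 = {A. trace A = 0}"

text \<open>Image of f on sl_2(K), variables x_1..x_m being the letters in [0..<m].\<close>
definition lie_image :: "nat \<Rightarrow> 'k::comm_ring_1 lie_poly \<Rightarrow> ('k^2^2) set" where
  "lie_image m f = {lie_eval a f | a. \<forall>i<m. a i \<in> sl2}"

fun mat_pow :: "'k::comm_ring_1^2^2 \<Rightarrow> nat \<Rightarrow> 'k^2^2" where
  "mat_pow A 0 = mat 1"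
| "mat_pow A (Suc n) = A ** mat_pow A n"

definition nilpotent_mat :: "'k::comm_ring_1^2^2 \<Rightarrow> bool" where
  "nilpotent_mat A \<longleftrightarrow> (\<exists>n. mat_pow A n = 0)"

end

theory Submission
  imports Defs
begin


lemma m22_eq: "(A::'a^2^2) = B \<longleftrightarrow> A$1$1 = B$1$1 \<and> A$1$2 = B$1$2 \<and> A$2$1 = B$2$1 \<and> A$2$2 = B$2$2"
  by (auto simp: vec_eq_iff forall_2)

lemma mmult_entry: "((A::'a::comm_ring_1^2^2) ** B)$i$j = A$i$1*B$1$j + A$i$2*B$2$j"
  by (simp add: matrix_matrix_mult_def sum_2)

lemma trace2: "trace (A::'a::comm_ring_1^2^2) = A$1$1 + A$2$2"
  by (simp add: trace_def sum_2)

definition mapM :: "('a \<Rightarrow> 'b) \<Rightarrow> 'a^2^2 \<Rightarrow> 'b^2^2" where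
  "mapM h M = (\<chi> i j. h (M$i$j))"

lemma mapM_entry[simp]: "mapM h M $ i $ j = h (M$i$j)"
  by (simp add: mapM_def)

lemma lie_eval_hom:
  fixes h :: "'a::comm_ring_1 \<Rightarrow> 'b::comm_ring_1"
  assumes hadd: "\<And>x y. h (x+y) = h x + h y" and hmul: "\<And>x y. h (x*y) = h x * h y"
    and hdiff: "\<And>x y. h (x-y) = h x - h y" and h0: "h 0 = 0"
  shows "mapM h (lie_eval a (map_lie_poly g f)) = lie_eval (\<lambda>i. mapM h (a i)) (map_lie_poly (h \<circ> g) f)"
  by (induction f) (simp_all add: vec_eq_iff forall_2 hadd hmul hdiff h0 commutator_def mmult_entry)

lemma lie_eval_cong: "(\<And>i. i \<in> lie_vars f \<Longrightarrow> a i = b i) \<Longrightarrow> lie_eval a f = lie_eval b f"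
  by (induction f) auto

lemma lie_eval_zero: "lie_eval (\<lambda>_. (0::'a::comm_ring_1^2^2)) f = 0"
  by (induction f) (simp_all add: vec_eq_iff commutator_def mmult_entry)

lemma lie_eval_trace: "(\<And>i. i \<in> lie_vars f \<Longrightarrow> trace (a i) = (0::'a::comm_ring_1)) \<Longrightarrow> trace (lie_eval a f) = 0"
proof (induction f)
  case (LScale c p) then show ?case by (simp add: trace2 distrib_left[symmetric])
qed (auto simp: trace2 commutator_def mmult_entry algebra_simps)

lemma scale_mat: "(\<chi> i j. c * (M::'a::comm_ring_1^2^2)$i$j) = mat c ** M"
  by (simp add: vec_eq_iff mmult_entry forall_2 mat_def)

lemma mat_comm: "(P::'a::comm_ring_1^2^2) ** mat c = mat c ** P"
  by (simp add: vec_eq_iff mmult_entry forall_2 mat_def mult.commute)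

lemma msub_l: "(P::'a::comm_ring_1^2^2) ** (A - B) = P ** A - P ** B"
  by (simp add: vec_eq_iff mmult_entry forall_2 algebra_simps)
lemma msub_r: "((A - B)::'a::comm_ring_1^2^2) ** P = A ** P - B ** P"
  by (simp add: vec_eq_iff mmult_entry forall_2 algebra_simps)
lemma madd_r: "((A + B)::'a::comm_ring_1^2^2) ** P = A ** P + B ** P"
  by (simp add: vec_eq_iff mmult_entry forall_2 algebra_simps)

lemma lie_eval_conj:
  fixes P Q :: "'a::comm_ring_1^2^2"
  assumes "P ** Q = mat 1" "Q ** P = mat 1"
  shows "lie_eval (\<lambda>i. P ** a i ** Q) f = P ** lie_eval a f ** Q"
proof (induction f)
  case (LAdd p q) then show ?case by (simp add: matrix_add_ldistrib madd_r)
next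
  case (LScale c p) then show ?case
    by (simp add: scale_mat matrix_mul_assoc mat_comm)
next
  case (LBracket p q)
  have e: "(P ** X ** Q) ** (P ** Y ** Q) = P ** (X ** Y) ** Q" for X Y
  proof -
    have "(P ** X ** Q) ** (P ** Y ** Q) = P ** X ** (Q ** P) ** Y ** Q" by (simp add: matrix_mul_assoc)
    then show ?thesis using assms by (simp add: matrix_mul_assoc)
  qed
  show ?case using LBracket by (simp add: commutator_def e msub_l msub_r)
qed (simp_all add: vec_eq_iff mmult_entry)



definition sig :: "'a::comm_ring_1 poly poly \<Rightarrow> 'a poly poly" where
  "sig p = pcompose p [:0, -1:]"

definition SS :: "'a::comm_ring_1 poly poly" where "SS = [:[:0,1:]:]"

lemma sig_add[simp]: "sig (p+q) = sig p + sig q" by (simp add: sig_def pcompose_add)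
lemma sig_diff[simp]: "sig (p-q) = sig p - sig q" by (simp add: sig_def pcompose_diff)
lemma sig_uminus[simp]: "sig (-p) = - sig p" by (simp add: sig_def pcompose_uminus)
lemma sig_mult[simp]: "sig (p*q) = sig p * sig q" by (simp add: sig_def pcompose_mult)
lemma sig_const[simp]: "sig [:c:] = [:c:]" by (simp add: sig_def)
lemma sig_0[simp]: "sig 0 = 0" by (simp add: sig_def)
lemma sig_one[simp]: "sig 1 = 1" by (simp add: sig_def pcompose_1)
lemma sig_two[simp]: "sig 2 = 2" by (metis one_add_one sig_add sig_one)
lemma sig_smult[simp]: "sig (smult c p) = smult c (sig p)" by (simp add: sig_def pcompose_smult)
lemma sig_SS[simp]: "sig SS = SS" by (simp add: sig_def SS_def)
lemma sig_sig[simp]: "sig (sig p) = p"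
proof -
  have "pcompose [:0, -1:] [:0, -1::'a poly:] = [:0,1:]" by (simp add: pcompose_pCons)
  then show ?thesis by (simp add: sig_def pcompose_assoc[symmetric])
qed

definition inQ :: "'a::comm_ring_1 poly poly^2^2 \<Rightarrow> bool" where
  "inQ M \<longleftrightarrow> M$2$2 = - M$1$1 \<and> sig (M$1$1) = - M$1$1 \<and> M$2$1 = SS * sig (M$1$2)"

lemma inQ_bracket:
  assumes "inQ A" "inQ B" shows "inQ (commutator A B)"
proof -
  obtain a1 b1 a2 b2 where A: "A$1$1 = a1" "A$1$2 = b1" "A$2$1 = SS * sig b1" "A$2$2 = -a1" "sig a1 = -a1"
    and B: "B$1$1 = a2" "B$1$2 = b2" "B$2$1 = SS * sig b2" "B$2$2 = -a2" "sig a2 = -a2"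
    using assms unfolding inQ_def by auto
  show ?thesis unfolding inQ_def commutator_def
    by (simp add: mmult_entry A B algebra_simps)
qed

definition CC :: "'a::comm_ring_1 \<Rightarrow> 'a poly poly" where "CC c = [:[:c:]:]"

lemma inQ_eval:
  assumes "\<And>i. inQ (X i)" shows "inQ (lie_eval X (map_lie_poly CC f))"
proof (induction f)
  case (LVar x) then show ?case using assms by simp
next
  case LZero then show ?case by (simp add: inQ_def)
next
  case (LAdd p q) then show ?case by (simp add: inQ_def algebra_simps)
next
  case (LScale c p) then show ?case by (simp add: inQ_def CC_def mult_smult_right)
next
  case (LBracket p q) then show ?case by (simp add: inQ_bracket)
qed

lemma aniso:
  fixes a b :: "'a::idom poly poly"
  assumes "a * a + SS * b * sig b = 0" shows "a = 0 \<and> b = 0"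
proof (cases "b = 0")
  case True then show ?thesis using assms by simp
next
  case False
  have sb: "sig b \<noteq> 0" using False by (metis sig_0 sig_sig)
  have SS0: "SS \<noteq> (0::'a poly poly)" by (simp add: SS_def)
  have ne: "SS * b * sig b \<noteq> 0" using sb SS0 False by simp
  have eq: "a * a = - (SS * b * sig b)" using assms by (simp add: eq_neg_iff_add_eq_0)
  have "lead_coeff (sig b) = lead_coeff b * (-1) ^ degree b"
    unfolding sig_def by (subst lead_coeff_comp) auto
  have "lead_coeff (a*a) = lead_coeff (- (SS * b * sig b))" using eq by simp
  then have L: "lead_coeff a * lead_coeff a = - ([:0,1:] * lead_coeff b * (lead_coeff b * (-1) ^ degree b))"
    by (simp add: lead_coeff_mult SS_def \<open>lead_coeff (sig b) = _\<close>)
  have la: "lead_coeff a \<noteq> 0" using ne eq by auto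
  have lb: "lead_coeff b \<noteq> 0" using False by simp
  have "degree (lead_coeff a * lead_coeff a) = 2 * degree (lead_coeff a)"
    using la by (simp add: degree_mult_eq)
  moreover have "degree (- ([:0,1:] * lead_coeff b * (lead_coeff b * (-1::'a poly) ^ degree b))) = 1 + 2 * degree (lead_coeff b)"
  proof -
    have "degree ((-1::'a poly) ^ degree b) = 0" by (simp add: degree_power_eq)
    moreover have "(-1::'a poly) ^ degree b \<noteq> 0" by simp
    ultimately show ?thesis using lb by (simp add: degree_mult_eq)
  qed
  ultimately show ?thesis using arg_cong[OF L, of degree] by presburger
qed

lemma inQ_det:
  fixes M :: "'a::idom poly poly^2^2"
  assumes "inQ M" "det M = 0" shows "M = 0"
proof -
  have "M$1$1 * M$1$1 + SS * M$1$2 * sig (M$1$2) = - det M"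
    using assms(1) unfolding inQ_def det_2 by (simp add: algebra_simps)
  then have "M$1$1 * M$1$1 + SS * M$1$2 * sig (M$1$2) = 0" using assms(2) by simp
  from aniso[OF this] show ?thesis using assms(1) unfolding inQ_def by (simp add: vec_eq_iff forall_2)
qed



lemma alg_infinite: "infinite (UNIV :: 'k::alg_closed_field set)"
proof
  assume fin: "finite (UNIV :: 'k set)"
  define q :: "'k poly" where "q = (\<Prod>a\<in>UNIV. [:-a, 1:])"
  have dq: "degree q = card (UNIV :: 'k set)"
    unfolding q_def using fin by (subst degree_prod_eq_sum_degree) auto
  have "card (UNIV :: 'k set) > 0" using fin by (simp add: finite_UNIV_card_ge_0)
  then have "degree (q + 1) > 0" using dq by (simp add: degree_add_eq_left)
  then obtain x where "poly (q + 1) x = 0" using alg_closed_imp_poly_has_root by blast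
  moreover have "poly q x = 0" unfolding q_def poly_prod using fin
    by (intro prod_zero) (auto intro: bexI[of _ x])
  ultimately show False by simp
qed

lemma poly_zero_inf:
  fixes p :: "'a::idom poly"
  assumes "infinite (UNIV :: 'a set)" "\<And>x. poly p x = 0" shows "p = 0"
proof (rule ccontr)
  assume "p \<noteq> 0"
  then have "finite {x. poly p x = 0}" by (rule poly_roots_finite)
  then show False using assms by simp
qed

definition ev :: "'a::comm_ring_1 \<Rightarrow> 'a \<Rightarrow> 'a poly poly \<Rightarrow> 'a" where
  "ev s t p = poly (poly p [:t:]) s"

lemma pp_zero:
  fixes p :: "'a::idom poly poly"
  assumes inf: "infinite (UNIV :: 'a set)" and z: "\<And>s t. ev s t p = 0" shows "p = 0"
proof -
  have t: "poly p [:t:] = 0" for t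
    using z unfolding ev_def by (intro poly_zero_inf[OF inf]) auto
  have "infinite (range (\<lambda>t::'a. [:t:]))"
    using inf by (simp add: finite_image_iff inj_on_def)
  moreover have "range (\<lambda>t::'a. [:t:]) \<subseteq> {x. poly p x = 0}" using t by auto
  ultimately have "infinite {x. poly p x = 0}" using finite_subset by blast
  then show ?thesis using poly_roots_finite by blast
qed

lemma ev_add: "ev s t (x+y) = ev s t x + ev s t y" by (simp add: ev_def)
lemma ev_mult: "ev s t (x*y) = ev s t x * ev s t y" by (simp add: ev_def)
lemma ev_diff: "ev s t (x-y) = ev s t x - ev s t y" by (simp add: ev_def)
lemma ev_0: "ev s t 0 = 0" by (simp add: ev_def)
lemma ev_CC: "ev s t \<circ> CC = id" by (simp add: ev_def CC_def fun_eq_iff)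

lemma ev_lie:
  "mapM (ev s t) (lie_eval X (map_lie_poly CC f)) = lie_eval (\<lambda>i. mapM (ev s t) (X i)) f"
  using lie_eval_hom[of "ev s t" X CC f, OF ev_add ev_mult ev_diff ev_0]
  by (simp add: ev_CC lie_poly.map_id)

lemma det_mapM:
  assumes "\<And>x y. h (x+y) = h x + h y" "\<And>x y. h (x*y) = h x * h y" "\<And>x y. h (x-y) = h x - h y"
  shows "det (mapM h (M::'a::comm_ring_1^2^2)) = (h (det M) :: 'b::comm_ring_1)"
  by (simp add: det_2 assms)

lemma nil_zero:
  fixes f :: "'k::alg_closed_field lie_poly" and x :: "nat \<Rightarrow> 'k^2^2"
  assumes two: "(2::'k) \<noteq> 0"
    and H: "\<And>a. (\<forall>i<m. a i \<in> sl2) \<Longrightarrow> det (lie_eval a f) = 0"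
    and V: "lie_vars f \<subseteq> {..<m}" and x: "\<forall>i<m. x i \<in> sl2"
  shows "lie_eval x f = 0"
proof -
  define al where "al i = [:0, [:x i $1$1:]:]" for i
  define be where "be i = [:[:(x i $1$2 + x i $2$1)/2:], [:(x i $1$2 - x i $2$1)/2:]:]" for i
  define X :: "nat \<Rightarrow> 'k poly poly^2^2" where "X i = (\<chi> r c. if r = 1 then (if c = 1 then al i else be i)
      else (if c = 1 then SS * sig (be i) else - al i))" for i
  have X11: "X i $1$1 = al i" and X12: "X i $1$2 = be i" and X21: "X i $2$1 = SS * sig (be i)"
    and X22: "X i $2$2 = - al i" for i by (simp_all add: X_def)
  have sal: "sig (al i) = - al i" for i by (simp add: al_def sig_def pcompose_pCons)
  have QX: "inQ (X i)" for i unfolding inQ_def by (simp add: X11 X12 X21 X22 sal)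
  define F where "F = lie_eval X (map_lie_poly CC f)"
  have QF: "inQ F" unfolding F_def using QX by (rule inQ_eval)
  have "det F = 0"
  proof (rule pp_zero[OF alg_infinite])
    fix s t :: 'k
    have "ev s t (det F) = det (mapM (ev s t) F)"
      by (rule det_mapM[symmetric]) (simp_all add: ev_add ev_mult ev_diff)
    also have "\<dots> = det (lie_eval (\<lambda>i. mapM (ev s t) (X i)) f)"
      unfolding F_def ev_lie ..
    also have "\<dots> = 0"
      by (rule H) (simp add: sl2_def trace2 X11 X22 ev_def)
    finally show "ev s t (det F) = 0" .
  qed
  then have "F = 0" using QF inQ_det by blast
  then have "lie_eval (\<lambda>i. mapM (ev 1 1) (X i)) f = 0"
    using ev_lie[of 1 1 X f] unfolding F_def by (simp add: vec_eq_iff ev_def)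
  moreover have "lie_eval (\<lambda>i. mapM (ev 1 1) (X i)) f = lie_eval x f"
  proof (rule lie_eval_cong)
    fix i assume "i \<in> lie_vars f"
    then have "x i \<in> sl2" using V x by auto
    then have tr: "x i $2$2 = - x i $1$1" by (simp add: sl2_def trace2 eq_neg_iff_add_eq_0 add.commute)
    have four: "(4::'k) \<noteq> 0"
    proof -
      have "(4::'k) = 2*2" by simp
      then show ?thesis using two by (metis mult_eq_0_iff)
    qed
    have h1: "(x i $1$2 + x i $2$1)/2 + (x i $1$2 - x i $2$1)/2 = x i $1$2"
      using two four by (simp add: field_simps)
    have h2: "(x i $1$2 + x i $2$1)/2 - (x i $1$2 - x i $2$1)/2 = x i $2$1"
      using two four by (simp add: field_simps)
    show "mapM (ev 1 1) (X i) = x i"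
      unfolding m22_eq using h1 h2 tr
      by (simp add: X11 X12 X21 X22 ev_def al_def be_def SS_def sig_def pcompose_pCons)
  qed
  ultimately show ?thesis by simp
qed



definition mk2 :: "'a \<Rightarrow> 'a \<Rightarrow> 'a \<Rightarrow> 'a \<Rightarrow> 'a^2^2" where
  "mk2 a b c d = (\<chi> i j. if i = 1 then (if j = 1 then a else b) else (if j = 1 then c else d))"

lemma mk2_simps[simp]: "mk2 a b c d $1$1 = a" "mk2 a b c d $1$2 = b" "mk2 a b c d $2$1 = c" "mk2 a b c d $2$2 = d"
  by (simp_all add: mk2_def)

definition cj :: "'a::comm_ring_1^2^2 \<Rightarrow> 'a^2^2 \<Rightarrow> bool" where
  "cj A B \<longleftrightarrow> (\<exists>P Q. P ** Q = mat 1 \<and> Q ** P = mat 1 \<and> B = P ** A ** Q)"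

lemma cj_sym: "cj A B \<Longrightarrow> cj B A"
  unfolding cj_def
  by (metis matrix_mul_assoc matrix_mul_lid matrix_mul_rid)

lemma cj_trans: "cj A B \<Longrightarrow> cj B C \<Longrightarrow> cj A C"
  unfolding cj_def
proof (elim exE conjE)
  fix P Q P' Q' :: "'a^2^2"
  assume h: "P ** Q = mat 1" "Q ** P = mat 1" "B = P ** A ** Q" "P' ** Q' = mat 1" "Q' ** P' = mat 1" "C = P' ** B ** Q'"
  have "(P' ** P) ** (Q ** Q') = mat 1" using h by (metis matrix_mul_assoc matrix_mul_rid)
  moreover have "(Q ** Q') ** (P' ** P) = mat 1" using h by (metis matrix_mul_assoc matrix_mul_rid)
  moreover have "C = (P' ** P) ** A ** (Q ** Q')" using h by (simp add: matrix_mul_assoc)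
  ultimately show "\<exists>P Q. P ** Q = mat 1 \<and> Q ** P = mat 1 \<and> C = P ** A ** Q" by blast
qed

lemma cj_by:
  fixes P A B :: "'k::field^2^2"
  assumes "det P \<noteq> 0" "B ** P = P ** A" shows "cj A B"
proof -
  define Q where "Q = mk2 (P$2$2 / det P) (- P$1$2 / det P) (- P$2$1 / det P) (P$1$1 / det P)"
  have e: "P$1$1*P$2$2 - P$1$2*P$2$1 = det P" by (simp add: det_2)
  have PQ: "P ** Q = mat 1" and QP: "Q ** P = mat 1"
    using assms(1) e by (simp_all add: Q_def m22_eq mmult_entry mat_def field_simps)
  have "B = B ** (P ** Q)" using PQ by simp
  also have "\<dots> = P ** A ** Q" using assms(2) by (simp add: matrix_mul_assoc)
  finally show ?thesis unfolding cj_def using PQ QP by blast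
qed

lemma trace_comm2: "trace ((A::'a::comm_ring_1^2^2) ** B) = trace (B ** A)"
  by (simp add: trace2 mmult_entry algebra_simps)

lemma trace_conj:
  fixes P Q :: "'a::comm_ring_1^2^2"
  assumes "Q ** P = mat 1" shows "trace (P ** (X::'a::comm_ring_1^2^2) ** Q) = trace X"
proof -
  have "trace (P ** X ** Q) = trace (Q ** (P ** X))" by (rule trace_comm2)
  also have "\<dots> = trace X" using assms by (simp add: matrix_mul_assoc)
  finally show ?thesis .
qed

lemma image_cj:
  assumes "A \<in> lie_image m f" "cj A B" shows "B \<in> lie_image m f"
proof -
  obtain a where a: "A = lie_eval a f" "\<forall>i<m. a i \<in> sl2" using assms(1) unfolding lie_image_def by auto
  obtain P Q where PQ: "P ** Q = mat 1" "Q ** P = mat 1" "B = P ** A ** Q" using assms(2) unfolding cj_def by auto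
  have "B = lie_eval (\<lambda>i. P ** a i ** Q) f" using PQ a lie_eval_conj by metis
  moreover have "\<forall>i<m. P ** a i ** Q \<in> sl2" using a PQ by (simp add: sl2_def trace_conj)
  ultimately show ?thesis unfolding lie_image_def by blast
qed

lemma sl2_22: "A \<in> sl2 \<Longrightarrow> A$2$2 = - A$1$1"
  by (simp add: sl2_def trace2 eq_neg_iff_add_eq_0 add.commute)

lemma mat_mult_entry: "(mat c ** (M::'a::comm_ring_1^2^2)) $ i $ j = c * M$i$j"
  by (simp add: mmult_entry mat_def) (metis exhaust_2)

lemma nilp_iff:
  fixes A :: "'a::idom^2^2"
  assumes "A \<in> sl2" shows "nilpotent_mat A \<longleftrightarrow> det A = 0"
proof -
  have sq: "A ** A = mat (- det A)"
    using sl2_22[OF assms] by (simp add: m22_eq mmult_entry mat_def det_2 algebra_simps)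
  have step: "mat_pow A (Suc (Suc n)) = mat (- det A) ** mat_pow A n" for n
    by (simp add: matrix_mul_assoc sq)
  show ?thesis
  proof
    assume "det A = 0"
    then have "mat_pow A 2 = 0" using step[of 0] by (simp add: numeral_2_eq_2)
    then show "nilpotent_mat A" unfolding nilpotent_mat_def by blast
  next
    assume nil: "nilpotent_mat A"
    show "det A = 0"
    proof (rule ccontr)
      assume d: "det A \<noteq> 0"
      then have A0: "A \<noteq> 0" by (auto simp: det_2)
      have "mat_pow A n \<noteq> 0" for n
      proof (induction n rule: nat_less_induct)
        case (1 n)
        show ?case
        proof (cases n)
          case 0 then show ?thesis by (simp add: vec_eq_iff mat_def)
        next
          case (Suc k) note k = this
          show ?thesis
          proof (cases k)
            case 0 then show ?thesis using k A0 by simp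
          next
            case (Suc j)
            have "mat_pow A j \<noteq> 0" using 1 k Suc by simp
            then obtain r c where "mat_pow A j $ r $ c \<noteq> 0" by (auto simp: vec_eq_iff)
            then have "(mat (- det A) ** mat_pow A j) $ r $ c \<noteq> 0" using d by (simp add: mat_mult_entry)
            then show ?thesis using k Suc step by auto
          qed
        qed
      qed
      then show False using nil unfolding nilpotent_mat_def by blast
    qed
  qed
qed

lemma canon_ss:
  fixes A :: "'k::alg_closed_field^2^2"
  assumes two: "(2::'k) \<noteq> 0" and A: "A \<in> sl2" "det A \<noteq> 0"
  shows "\<exists>\<mu>. \<mu> * \<mu> = - det A \<and> cj (mk2 \<mu> 0 0 (-\<mu>)) A"
proof -
  define a b c where "a = A$1$1" "b = A$1$2" "c = A$2$1"
  have A22: "A$2$2 = -a" using sl2_22[OF A(1)] a_b_c_def by simp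
  have dA: "det A = - (a*a) - b*c" using A22 by (simp add: det_2 a_b_c_def)
  show ?thesis
  proof (cases "b = 0")
    case False
    obtain \<mu> where mu: "\<mu> ^ 2 = - det A" using nth_root_exists[of 2 "- det A"] by auto
    then have mu2: "\<mu> * \<mu> = a*a + b*c" using dA by (simp add: power2_eq_square)
    have mu0: "\<mu> \<noteq> 0" using mu A(2) by auto
    define P where "P = mk2 b b (\<mu> - a) (-\<mu> - a)"
    have "det P = - (2 * b * \<mu>)" by (simp add: P_def det_2 algebra_simps)
    then have "det P \<noteq> 0" using two False mu0 by simp
    moreover have "A ** P = P ** mk2 \<mu> 0 0 (-\<mu>)"
      using mu2 by (simp add: P_def m22_eq mmult_entry A22 a_b_c_def[symmetric] algebra_simps)
    ultimately have "cj (mk2 \<mu> 0 0 (-\<mu>)) A" by (rule cj_by)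
    moreover have "\<mu> * \<mu> = - det A" using mu2 dA by simp
    ultimately show ?thesis by blast
  next
    case True
    have a0: "a \<noteq> 0" using A(2) dA True by auto
    define P where "P = mk2 (2*a) 0 c 1"
    have "det P \<noteq> 0" using two a0 by (simp add: P_def det_2)
    moreover have "A ** P = P ** mk2 a 0 0 (-a)"
      using True by (simp add: P_def m22_eq mmult_entry A22 a_b_c_def[symmetric] algebra_simps)
    ultimately have "cj (mk2 a 0 0 (-a)) A" by (rule cj_by)
    then show ?thesis using dA True by auto
  qed
qed

lemma cj_ss:
  fixes A B :: "'k::alg_closed_field^2^2"
  assumes two: "(2::'k) \<noteq> 0" and A: "A \<in> sl2" "det A \<noteq> 0" and B: "B \<in> sl2" "det B = det A"
  shows "cj A B"
proof -
  obtain \<mu> where mu: "\<mu> * \<mu> = - det A" "cj (mk2 \<mu> 0 0 (-\<mu>)) A" using canon_ss[OF two A] by blast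
  obtain \<nu> where nu: "\<nu> * \<nu> = - det A" "cj (mk2 \<nu> 0 0 (-\<nu>)) B" using canon_ss[OF two B(1)] A(2) B(2) by auto
  have "(\<nu> - \<mu>) * (\<nu> + \<mu>) = 0" using mu nu by (simp add: algebra_simps)
  then have "\<nu> = \<mu> \<or> \<nu> = -\<mu>" by (auto simp: eq_neg_iff_add_eq_0)
  moreover have "cj (mk2 \<mu> 0 0 (-\<mu>)) (mk2 (-\<mu>) 0 0 \<mu>)"
    by (rule cj_by[of "mk2 0 1 1 0"]) (simp_all add: det_2 m22_eq mmult_entry)
  moreover have "cj X X" for X :: "'k^2^2" unfolding cj_def by (rule exI[of _ "mat 1"], rule exI[of _ "mat 1"]) simp
  ultimately have "cj (mk2 \<mu> 0 0 (-\<mu>)) (mk2 \<nu> 0 0 (-\<nu>))" by auto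
  then show ?thesis using mu nu cj_sym cj_trans by metis
qed

lemma cj_nil:
  fixes A :: "'k::field^2^2"
  assumes A: "A \<in> sl2" "det A = 0" "A \<noteq> 0"
  shows "cj (mk2 0 1 0 0) A"
proof -
  define a b c where "a = A$1$1" "b = A$1$2" "c = A$2$1"
  have A22: "A$2$2 = -a" using sl2_22[OF A(1)] a_b_c_def by simp
  have "a*a + b*c = - det A" using A22 by (simp add: det_2 a_b_c_def algebra_simps)
  then have dA: "a*a + b*c = 0" using A(2) by simp
  show ?thesis
  proof (cases "b = 0")
    case False
    define P where "P = mk2 b 0 (-a) 1"
    have "det P \<noteq> 0" using False by (simp add: P_def det_2)
    moreover have "A ** P = P ** mk2 0 1 0 0"
      using dA by (simp add: P_def m22_eq mmult_entry A22 a_b_c_def[symmetric] algebra_simps)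
    ultimately show ?thesis using cj_by by blast
  next
    case True
    then have a0: "a = 0" using dA by simp
    then have c0: "c \<noteq> 0" using A(3) True A22 by (auto simp: m22_eq a_b_c_def)
    define P where "P = mk2 0 1 c 0"
    have "det P \<noteq> 0" using c0 by (simp add: P_def det_2)
    moreover have "A ** P = P ** mk2 0 1 0 0"
      using True a0 by (simp add: P_def m22_eq mmult_entry A22 a_b_c_def[symmetric] algebra_simps)
    ultimately show ?thesis using cj_by by blast
  qed
qed



lemma line_lemma:
  fixes f :: "'k::alg_closed_field lie_poly" and y :: "nat \<Rightarrow> 'k^2^2"
  assumes d1: "det (lie_eval y f) \<noteq> 0"
  shows "\<exists>l. det (lie_eval (\<lambda>i. \<chi> r c. l * y i $ r $ c) f) = d"
proof -
  define Y :: "nat \<Rightarrow> 'k poly^2^2" where "Y i = (\<chi> r c. [:0, y i $ r $ c:])" for i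
  define G where "G = det (lie_eval Y (map_lie_poly (\<lambda>c. [:c:]) f))"
  have PG: "poly G l = det (lie_eval (\<lambda>i. \<chi> r c. l * y i $ r $ c) f)" for l
  proof -
    have "poly G l = det (mapM (\<lambda>p. poly p l) (lie_eval Y (map_lie_poly (\<lambda>c. [:c:]) f)))"
      unfolding G_def by (rule det_mapM[symmetric]) simp_all
    also have "\<dots> = det (lie_eval (\<lambda>i. mapM (\<lambda>p. poly p l) (Y i)) (map_lie_poly ((\<lambda>p. poly p l) \<circ> (\<lambda>c. [:c:])) f))"
      by (subst lie_eval_hom) simp_all
    also have "(\<lambda>p. poly p l) \<circ> (\<lambda>c. [:c:]) = id" by (simp add: fun_eq_iff)
    also have "(\<lambda>i. mapM (\<lambda>p. poly p l) (Y i)) = (\<lambda>i. \<chi> r c. l * y i $ r $ c)"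
      by (simp add: fun_eq_iff vec_eq_iff Y_def)
    finally show ?thesis by (simp add: lie_poly.map_ident)
  qed
  have "(\<lambda>i. \<chi> r c. (0::'k) * y i $ r $ c) = (\<lambda>_. 0)" by (simp add: fun_eq_iff vec_eq_iff)
  then have G0: "poly G 0 = 0" using PG[of 0] by (simp add: lie_eval_zero det_2)
  have "(\<lambda>i. \<chi> r c. (1::'k) * y i $ r $ c) = y" by (simp add: fun_eq_iff vec_eq_iff)
  then have G1: "poly G 1 \<noteq> 0" using PG[of 1] d1 by simp
  have dG: "degree G > 0"
  proof (rule ccontr)
    assume "\<not> degree G > 0"
    then obtain a where "G = [:a:]" using degree0_coeffs by blast
    then show False using G0 G1 by simp
  qed
  then have "degree (G + [:-d:]) > 0" by (simp add: degree_add_eq_left)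
  then obtain l where "poly (G + [:-d:]) l = 0" using alg_closed_imp_poly_has_root by blast
  then have "poly G l = d" by simp
  then show ?thesis using PG by auto
qed

theorem theorem1p16:
  fixes f :: "'k::alg_closed_field lie_poly" and m :: nat
  assumes "(2::'k) \<noteq> 0"
    and "lie_vars f \<subseteq> {..<m}"
  shows "lie_image m f = {0}
       \<or> lie_image m f = sl2
       \<or> lie_image m f = {0} \<union> {A \<in> sl2. \<not> nilpotent_mat A}"
proof -
  note two = assms(1) and V = assms(2)
  let ?I = "lie_image m f"
  have sub: "?I \<subseteq> sl2"
  proof
    fix A assume "A \<in> ?I"
    then obtain a where a: "A = lie_eval a f" "\<forall>i<m. a i \<in> sl2" unfolding lie_image_def by auto
    have "trace A = 0" unfolding a(1) by (rule lie_eval_trace) (use a(2) V in \<open>auto simp: sl2_def\<close>)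
    then show "A \<in> sl2" by (simp add: sl2_def)
  qed
  have zero: "0 \<in> ?I"
  proof -
    have "(0::'k^2^2) \<in> sl2" by (simp add: sl2_def trace2)
    then have "lie_eval (\<lambda>_. 0) f \<in> ?I" unfolding lie_image_def by blast
    then show ?thesis by (simp add: lie_eval_zero)
  qed
  show ?thesis
  proof (cases "?I \<subseteq> {0}")
    case True then show ?thesis using zero by blast
  next
    case False
    then obtain a where a: "\<forall>i<m. a i \<in> sl2" "lie_eval a f \<noteq> 0" unfolding lie_image_def by auto
    obtain y where y: "\<forall>i<m. y i \<in> sl2" "det (lie_eval y f) \<noteq> 0"
      using nil_zero[OF two _ V a(1)] a(2) by blast
    have ss: "B \<in> ?I" if B: "B \<in> sl2" "det B \<noteq> 0" for B
    proof -
      obtain l where l: "det (lie_eval (\<lambda>i. \<chi> r c. l * y i $ r $ c) f) = det B"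
        using line_lemma[OF y(2)] by blast
      have "\<forall>i<m. (\<chi> r c. l * y i $ r $ c) \<in> sl2"
        using y(1) by (simp add: sl2_def trace2 distrib_left[symmetric])
      then have inI: "lie_eval (\<lambda>i. \<chi> r c. l * y i $ r $ c) f \<in> ?I" unfolding lie_image_def by blast
      have "cj B (lie_eval (\<lambda>i. \<chi> r c. l * y i $ r $ c) f)"
        by (rule cj_ss[OF two B]) (use inI sub l in auto)
      then show ?thesis using inI image_cj cj_sym by blast
    qed
    show ?thesis
    proof (cases "\<exists>N \<in> ?I. N \<noteq> 0 \<and> det N = 0")
      case True
      then obtain N where N: "N \<in> ?I" "N \<noteq> 0" "det N = 0" by blast
      have "sl2 \<subseteq> ?I"
      proof
        fix B :: "'k^2^2" assume B: "B \<in> sl2"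
        show "B \<in> ?I"
        proof (cases "det B = 0")
          case False then show ?thesis using ss B by blast
        next
          case True
          show ?thesis
          proof (cases "B = 0")
            case True then show ?thesis using zero by simp
          next
            case False
            have "cj N B" using cj_nil[OF B \<open>det B = 0\<close> False] cj_nil[of N] N sub cj_sym cj_trans by blast
            then show ?thesis using image_cj N by blast
          qed
        qed
      qed
      then show ?thesis using sub by blast
    next
      case False
      have "?I = {0} \<union> {A \<in> sl2. \<not> nilpotent_mat A}"
      proof
        show "?I \<subseteq> {0} \<union> {A \<in> sl2. \<not> nilpotent_mat A}"
          using False sub nilp_iff by blast
        show "{0} \<union> {A \<in> sl2. \<not> nilpotent_mat A} \<subseteq> ?I"
          using zero ss nilp_iff by blast
      qed
      then show ?thesis by blast
    qed
  qed
qed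


end
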